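(* Let $S=\langle P,\varphi\rangle$ be a SUT model, $t$ a strength and $N\ge1$ an integer. The optimal cost of the Partial MaxSAT instance $TPMSat_{CCX}^{N,t,S}$ (defined in the context) is $|\mathcal T_a|-T(N;t,S)$.
   Context: A SUT model is $S=\langle P,\varphi\rangle$, where $P$ is a finite set of parameters, each $p\in P$ having a finite nonempty domain $d(p)$, and $\varphi$ is a propositional formula whose atoms have the form $(p=v)$ with $p\in P$, $v\in d(p)$. A test case is a full assignment $A$ giving each $p$ a value in $d(p)$ such that $\varphi$ is true when each atom $(p=v)$ is read as true iff $A(p)=v$; it is assumed that at least one test case exists. Fix a strength $t$ with $1\le t\le|P|$. A $t$-tuple is an assignment of values to exactly $t$ distinct parameters, viewed as a set of pairs $(p,v)$; a test case covers $\tau$ if it assigns $v$ to $p$ for every $(p,v)\in\tau$. A $t$-tuple is allowed if some test case covers it; $\mathcal T_a$ is the set of allowed $t$-tuples. The Tuple Number $T(N;t,S)$ is the maximum number of $t$-tuples covered (each by at least one member) by a list of $N$ test cases. $[N]=\{1,\dots,N\}$. A Partial MaxSAT instance consists of hard constraints and soft clauses $(c,w)$ with positive integer weights; its optimal cost is the minimum, over truth assignments satisfying all hard constraints, of the total weight of falsified soft clauses ($\infty$ if the hard constraints are unsatisfiable). Variables: $x_{i,p,v}$ ($i\in[N]$, $p\in P$, $v\in d(p)$), $c^i_\tau$ ($i\in\{0,\dots,N\}$, $\tau\in\mathcal T_a$). Hard constraints of $TPMSat_{CCX}^{N,t,S}$: (X) for every $i\in[N]$, $p\in P$: exactly one of $\{x_{i,p,v}:v\in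 d(p)\}$ is true; (SUTX) for every $i\in[N]$: the formula obtained from $\varphi$ by replacing each atom $(p=v)$ with $x_{i,p,v}$; (a) for every $i\in[N]$, $\tau\in\mathcal T_a$, $(p,v)\in\tau$: $c^i_\tau\rightarrow(c^{i-1}_\tau\vee x_{i,p,v})$; (c) for every $\tau\in\mathcal T_a$: $c^N_\tau\rightarrow\neg c^0_\tau$. Soft clauses: $(c^N_\tau,1)$ for every $\tau\in\mathcal T_a$. *)

theory Defs
  imports Main "HOL-Library.Extended_Nat"
begin

text \<open>The connective ExactlyOne S
  (S a finite set of atoms) is the cardinality constraint "exactly one atom of S is true",
  used for the hard constraints (X).\<close>

datatype 'a pform =
    Atom 'a
  | PTrue
  | PFalse
  | PNot "'a pform"
  | PAnd "'a pform" "'a pform"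
  | POr "'a pform" "'a pform"
  | PImp "'a pform" "'a pform"
  | ExactlyOne "'a set"

fun peval :: "('a \<Rightarrow> bool) \<Rightarrow> 'a pform \<Rightarrow> bool" where
  "peval \<alpha> (Atom a) = \<alpha> a"
| "peval \<alpha> PTrue = True"
| "peval \<alpha> PFalse = False"
| "peval \<alpha> (PNot f) = (\<not> peval \<alpha> f)"
| "peval \<alpha> (PAnd f g) = (peval \<alpha> f \<and> peval \<alpha> g)"
| "peval \<alpha> (POr f g) = (peval \<alpha> f \<or> peval \<alpha> g)"
| "peval \<alpha> (PImp f g) = (peval \<alpha> f \<longrightarrow> peval \<alpha> g)"
| "peval \<alpha> (ExactlyOne S) = (\<exists>!a. a \<in> S \<and> \<alpha> a)"

fun atoms :: "'a pform \<Rightarrow> 'a set" where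
  "atoms (Atom a) = {a}"
| "atoms PTrue = {}"
| "atoms PFalse = {}"
| "atoms (PNot f) = atoms f"
| "atoms (PAnd f g) = atoms f \<union> atoms g"
| "atoms (POr f g) = atoms f \<union> atoms g"
| "atoms (PImp f g) = atoms f \<union> atoms g"
| "atoms (ExactlyOne S) = S"

fun rename :: "('a \<Rightarrow> 'b) \<Rightarrow> 'a pform \<Rightarrow> 'b pform" where
  "rename g (Atom a) = Atom (g a)"
| "rename g PTrue = PTrue"
| "rename g PFalse = PFalse"
| "rename g (PNot f) = PNot (rename g f)"
| "rename g (PAnd f h) = PAnd (rename g f) (rename g h)"
| "rename g (POr f h) = POr (rename g f) (rename g h)"
| "rename g (PImp f h) = PImp (rename g f) (rename g h)"
| "rename g (ExactlyOne S) = ExactlyOne (g ` S)"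

text \<open>Optimal cost: minimum over assignments satisfying all hard constraints of the total weight
  of falsified soft clauses; infinity (Inf of the empty set in enat) if none exists.\<close>

definition pmaxsat_cost :: "'x pform set \<Rightarrow> ('x pform \<times> nat) set \<Rightarrow> enat" where
  "pmaxsat_cost H Soft =
     (INF \<alpha> \<in> {\<alpha>. \<forall>h\<in>H. peval \<alpha> h}.
        enat (\<Sum>(c, w)\<in>Soft. if peval \<alpha> c then 0 else w))"

definition sut_model :: "'p set \<Rightarrow> ('p \<Rightarrow> 'v set) \<Rightarrow> ('p \<times> 'v) pform \<Rightarrow> bool" where
  "sut_model P d \<phi> \<longleftrightarrow> finite P \<and> (\<forall>p\<in>P. finite (d p) \<and> d p \<noteq> {})
     \<and> (\<forall>(p, v)\<in>atoms \<phi>. p \<in> P \<and> v \<in> d p)"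

definition test_case :: "'p set \<Rightarrow> ('p \<Rightarrow> 'v set) \<Rightarrow> ('p \<times> 'v) pform \<Rightarrow> ('p \<Rightarrow> 'v) \<Rightarrow> bool" where
  "test_case P d \<phi> A \<longleftrightarrow> (\<forall>p\<in>P. A p \<in> d p) \<and> peval (\<lambda>(p, v). A p = v) \<phi>"

definition t_tuple :: "nat \<Rightarrow> 'p set \<Rightarrow> ('p \<Rightarrow> 'v set) \<Rightarrow> ('p \<times> 'v) set \<Rightarrow> bool" where
  "t_tuple t P d \<tau> \<longleftrightarrow> \<tau> \<subseteq> Sigma P d \<and> inj_on fst \<tau> \<and> card \<tau> = t"

definition covers :: "('p \<Rightarrow> 'v) \<Rightarrow> ('p \<times> 'v) set \<Rightarrow> bool" where
  "covers A \<tau> \<longleftrightarrow> (\<forall>(p, v)\<in>\<tau>. A p = v)"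

definition allowed_tuples :: "nat \<Rightarrow> 'p set \<Rightarrow> ('p \<Rightarrow> 'v set) \<Rightarrow> ('p \<times> 'v) pform
    \<Rightarrow> ('p \<times> 'v) set set" where
  "allowed_tuples t P d \<phi> = {\<tau>. t_tuple t P d \<tau> \<and> (\<exists>A. test_case P d \<phi> A \<and> covers A \<tau>)}"

definition tuple_number :: "nat \<Rightarrow> nat \<Rightarrow> 'p set \<Rightarrow> ('p \<Rightarrow> 'v set) \<Rightarrow> ('p \<times> 'v) pform \<Rightarrow> nat" where
  "tuple_number N t P d \<phi> =
     Max {card {\<tau>. t_tuple t P d \<tau> \<and> (\<exists>A\<in>set L. covers A \<tau>)} | L.
            length L = N \<and> (\<forall>A\<in>set L. test_case P d \<phi> A)}"

datatype ('p, 'v) tvar = X nat 'p 'v | C nat "('p \<times> 'v) set"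

definition ccx_hard :: "nat \<Rightarrow> nat \<Rightarrow> 'p set \<Rightarrow> ('p \<Rightarrow> 'v set) \<Rightarrow> ('p \<times> 'v) pform
    \<Rightarrow> ('p, 'v) tvar pform set" where
  "ccx_hard N t P d \<phi> =
     \<comment> \<open>(X)\<close>
     {ExactlyOne {X i p v | v. v \<in> d p} | i p. i \<in> {1..N} \<and> p \<in> P}
     \<comment> \<open>(SUTX)\<close>
   \<union> {rename (\<lambda>(p, v). X i p v) \<phi> | i. i \<in> {1..N}}
     \<comment> \<open>(a)\<close>
   \<union> {PImp (Atom (C i \<tau>)) (POr (Atom (C (i - 1) \<tau>)) (Atom (X i p v))) | i \<tau> p v.
        i \<in> {1..N} \<and> \<tau> \<in> allowed_tuples t P d \<phi> \<and> (p, v) \<in> \<tau>}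
     \<comment> \<open>(c)\<close>
   \<union> {PImp (Atom (C N \<tau>)) (PNot (Atom (C 0 \<tau>))) | \<tau>. \<tau> \<in> allowed_tuples t P d \<phi>}"

definition ccx_soft :: "nat \<Rightarrow> nat \<Rightarrow> 'p set \<Rightarrow> ('p \<Rightarrow> 'v set) \<Rightarrow> ('p \<times> 'v) pform
    \<Rightarrow> (('p, 'v) tvar pform \<times> nat) set" where
  "ccx_soft N t P d \<phi> = {(Atom (C N \<tau>), 1) | \<tau>. \<tau> \<in> allowed_tuples t P d \<phi>}"

end

theory Submission
  imports Defs
begin
lemma peval_cong:
  "(\<forall>a\<in>atoms f. \<alpha> a = \<beta> a) \<Longrightarrow> peval \<alpha> f = peval \<beta> f"
  by (induction f) auto

lemma peval_rename:
  "inj g \<Longrightarrow> peval \<alpha> (rename g f) = peval (\<alpha> \<circ> g) f"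
proof (induction f)
  case (ExactlyOne S)
  have "(\<exists>!a. a \<in> g ` S \<and> \<alpha> a) = (\<exists>!b. b \<in> S \<and> \<alpha> (g b))"
  proof
    assume "\<exists>!a. a \<in> g ` S \<and> \<alpha> a"
    then obtain a where a: "a \<in> g ` S" "\<alpha> a" and u: "\<And>a'. a' \<in> g ` S \<and> \<alpha> a' \<Longrightarrow> a' = a" by blast
    then obtain b where "b \<in> S" "a = g b" by blast
    then show "\<exists>!b. b \<in> S \<and> \<alpha> (g b)" using a u ExactlyOne unfolding inj_def by (metis image_eqI)
  next
    assume "\<exists>!b. b \<in> S \<and> \<alpha> (g b)"
    then obtain b where b: "b \<in> S" "\<alpha> (g b)" and u: "\<And>b'. b' \<in> S \<and> \<alpha> (g b') \<Longrightarrow> b' = b" by blast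
    then show "\<exists>!a. a \<in> g ` S \<and> \<alpha> a" by blast
  qed
  then show ?case by simp
qed auto

lemma inj_X: "inj (\<lambda>(p, v). X i p v)"
  by (auto simp: inj_def)
lemma mem_X: "i \<in> {1..N} \<Longrightarrow> p \<in> P \<Longrightarrow> ExactlyOne {X i p v | v. v \<in> d p} \<in> ccx_hard N t P d \<phi>"
  unfolding ccx_hard_def by (intro UnI1) blast
lemma mem_S: "i \<in> {1..N} \<Longrightarrow> rename (\<lambda>(p, v). X i p v) \<phi> \<in> ccx_hard N t P d \<phi>"
  unfolding ccx_hard_def by (intro UnI1 UnI2) blast
lemma mem_a: "i \<in> {1..N} \<Longrightarrow> \<tau> \<in> allowed_tuples t P d \<phi> \<Longrightarrow> (p, v) \<in> \<tau> \<Longrightarrow>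
   PImp (Atom (C i \<tau>)) (POr (Atom (C (i - 1) \<tau>)) (Atom (X i p v))) \<in> ccx_hard N t P d \<phi>"
  unfolding ccx_hard_def by (intro UnI1 UnI2) blast
lemma mem_c: "\<tau> \<in> allowed_tuples t P d \<phi> \<Longrightarrow>
   PImp (Atom (C N \<tau>)) (PNot (Atom (C 0 \<tau>))) \<in> ccx_hard N t P d \<phi>"
  unfolding ccx_hard_def by (intro UnI2) blast
lemma mem_cases:
  assumes "h \<in> ccx_hard N t P d \<phi>"
  obtains (x) i p where "i \<in> {1..N}" "p \<in> P" "h = ExactlyOne {X i p v | v. v \<in> d p}"
      | (s) i where "i \<in> {1..N}" "h = rename (\<lambda>(p, v). X i p v) \<phi>"
      | (a) i \<tau> p v where "i \<in> {1..N}" "\<tau> \<in> allowed_tuples t P d \<phi>" "(p, v) \<in> \<tau>"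
          "h = PImp (Atom (C i \<tau>)) (POr (Atom (C (i - 1) \<tau>)) (Atom (X i p v)))"
      | (c) \<tau> where "\<tau> \<in> allowed_tuples t P d \<phi>" "h = PImp (Atom (C N \<tau>)) (PNot (Atom (C 0 \<tau>)))"
  using assms unfolding ccx_hard_def
  apply (elim UnE)
  apply (auto simp only: mem_Collect_eq)
  done
theorem proposition10:
  fixes P :: "'p set" and d :: "'p \<Rightarrow> 'v set" and \<phi> :: "('p \<times> 'v) pform"
    and N t :: nat
  assumes "sut_model P d \<phi>"
    and "\<exists>A. test_case P d \<phi> A"
    and "1 \<le> t" and "t \<le> card P"
    and "1 \<le> N"
  shows "pmaxsat_cost (ccx_hard N t P d \<phi>) (ccx_soft N t P d \<phi>)
         = enat (card (allowed_tuples t P d \<phi>) - tuple_number N t P d \<phi>)"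
proof -
  define Al where "Al = allowed_tuples t P d \<phi>"
  define H where "H = ccx_hard N t P d \<phi>"
  define cov where "cov L = {\<tau>. t_tuple t P d \<tau> \<and> (\<exists>A\<in>set L. covers A \<tau>)}" for L :: "('p \<Rightarrow> 'v) list"
  define LS where "LS = {L. length L = N \<and> (\<forall>A\<in>set L. test_case P d \<phi> A)}"
  have TN: "tuple_number N t P d \<phi> = Max ((\<lambda>L. card (cov L)) ` LS)"
    unfolding tuple_number_def cov_def LS_def by (rule arg_cong[where f=Max]) blast
  have finP: "finite P" and finD: "\<And>p. p \<in> P \<Longrightarrow> finite (d p)"
    and atm: "\<And>p v. (p, v) \<in> atoms \<phi> \<Longrightarrow> p \<in> P \<and> v \<in> d p"
    using assms(1) unfolding sut_model_def by auto
  have finAl: "finite Al"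
  proof -
    have "Al \<subseteq> Pow (Sigma P d)" unfolding Al_def allowed_tuples_def t_tuple_def by auto
    moreover have "finite (Sigma P d)" using finP finD by auto
    ultimately show ?thesis using finite_subset by blast
  qed
  have covAl: "cov L \<subseteq> Al" if "L \<in> LS" for L
    using that unfolding cov_def Al_def allowed_tuples_def LS_def by auto
  have finLS: "finite ((\<lambda>L. card (cov L)) ` LS)"
  proof -
    have "(\<lambda>L. card (cov L)) ` LS \<subseteq> {..card Al}"
      using covAl finAl by (auto intro: card_mono)
    then show ?thesis using finite_subset by blast
  qed
  obtain A0 where A0: "test_case P d \<phi> A0" using assms(2) by blast
  have LSne: "replicate N A0 \<in> LS" unfolding LS_def using A0 by auto
  have cost: "(\<Sum>(c, w)\<in>ccx_soft N t P d \<phi>. if peval \<alpha> c then 0 else w)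
      = card Al - card {\<tau>\<in>Al. \<alpha> (C N \<tau>)}" for \<alpha>
  proof -
    have "ccx_soft N t P d \<phi> = (\<lambda>\<tau>. (Atom (C N \<tau>), 1)) ` Al"
      unfolding ccx_soft_def Al_def by auto
    moreover have "inj_on (\<lambda>\<tau>. (Atom (C N \<tau>) :: ('p,'v) tvar pform, 1::nat)) Al"
      by (auto simp: inj_on_def)
    ultimately have "(\<Sum>(c, w)\<in>ccx_soft N t P d \<phi>. if peval \<alpha> c then 0 else w)
        = (\<Sum>\<tau>\<in>Al. if \<alpha> (C N \<tau>) then 0 else (1::nat))"
      by (simp add: sum.reindex del: One_nat_def)
    also have "\<dots> = card {\<tau>\<in>Al. \<not> \<alpha> (C N \<tau>)}"
      using finAl by (simp add: sum.If_cases) (rule arg_cong[where f=card], auto)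
    also have "{\<tau>\<in>Al. \<not> \<alpha> (C N \<tau>)} = Al - {\<tau>\<in>Al. \<alpha> (C N \<tau>)}" by auto
    also have "card \<dots> = card Al - card {\<tau>\<in>Al. \<alpha> (C N \<tau>)}"
      using finAl by (subst card_Diff_subset) (auto intro: finite_subset)
    finally show ?thesis .
  qed
  have lower: "card Al - tuple_number N t P d \<phi> \<le> card Al - card {\<tau>\<in>Al. \<alpha> (C N \<tau>)}"
    if hs: "\<forall>h\<in>H. peval \<alpha> h" for \<alpha>
  proof -
    define Ai where "Ai i p = (THE v. v \<in> d p \<and> \<alpha> (X i p v))" for i p
    have Ai: "Ai i p \<in> d p \<and> (\<forall>v\<in>d p. \<alpha> (X i p v) \<longleftrightarrow> Ai i p = v)"
      if "i \<in> {1..N}" "p \<in> P" for i p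
    proof -
      have "ExactlyOne {X i p v | v. v \<in> d p} \<in> H" unfolding H_def using that by (rule mem_X)
      then have "peval \<alpha> (ExactlyOne {X i p v | v. v \<in> d p})" using hs by blast
      then have "\<exists>!a. a \<in> {X i p v | v. v \<in> d p} \<and> \<alpha> a" by simp
      then have ex: "\<exists>!v. v \<in> d p \<and> \<alpha> (X i p v)" by auto
      then have "Ai i p \<in> d p \<and> \<alpha> (X i p (Ai i p))" unfolding Ai_def by (rule theI')
      then show ?thesis using ex by blast
    qed
    have tc: "test_case P d \<phi> (Ai i)" if "i \<in> {1..N}" for i
    proof -
      have "rename (\<lambda>(p, v). X i p v) \<phi> \<in> H" unfolding H_def using that by (rule mem_S)
      then have "peval \<alpha> (rename (\<lambda>(p, v). X i p v) \<phi>)" using hs by blast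
      then have "peval (\<alpha> \<circ> (\<lambda>(p, v). X i p v)) \<phi>" by (simp add: peval_rename[OF inj_X])
      moreover have "\<forall>a\<in>atoms \<phi>. (\<alpha> \<circ> (\<lambda>(p, v). X i p v)) a = (\<lambda>(p, v). Ai i p = v) a"
        using atm Ai[OF that] by auto
      ultimately have "peval (\<lambda>(p, v). Ai i p = v) \<phi>" using peval_cong by metis
      then show ?thesis unfolding test_case_def using Ai[OF that] by auto
    qed
    define L where "L = map Ai [1..<N+1]"
    have LLS: "L \<in> LS" unfolding LS_def L_def using tc by auto
    have chain: "n \<le> N \<Longrightarrow> \<alpha> (C n \<tau>) \<Longrightarrow> \<not> \<alpha> (C 0 \<tau>) \<Longrightarrow> \<exists>i\<in>{1..n}. covers (Ai i) \<tau>"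
      if "\<tau> \<in> Al" for \<tau> n
    proof (induction n)
      case 0 then show ?case by simp
    next
      case (Suc n)
      show ?case
      proof (cases "\<alpha> (C n \<tau>)")
        case True then show ?thesis using Suc by force
      next
        case False
        have "covers (Ai (Suc n)) \<tau>" unfolding covers_def
        proof (clarify)
          fix p v assume pv: "(p, v) \<in> \<tau>"
          have "PImp (Atom (C (Suc n) \<tau>)) (POr (Atom (C (Suc n - 1) \<tau>)) (Atom (X (Suc n) p v))) \<in> H"
            unfolding H_def using Suc.prems pv that unfolding Al_def by (intro mem_a) auto
          then have "\<alpha> (X (Suc n) p v)" using hs Suc.prems False by fastforce
          moreover have "p \<in> P" "v \<in> d p" using pv that
            unfolding Al_def allowed_tuples_def t_tuple_def by auto
          ultimately show "Ai (Suc n) p = v" using Ai[of "Suc n" p] Suc.prems by auto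
        qed
        then show ?thesis by force
      qed
    qed
    have sub: "{\<tau>\<in>Al. \<alpha> (C N \<tau>)} \<subseteq> cov L"
    proof
      fix \<tau> assume "\<tau> \<in> {\<tau>\<in>Al. \<alpha> (C N \<tau>)}"
      then have T: "\<tau> \<in> Al" "\<alpha> (C N \<tau>)" by auto
      have "PImp (Atom (C N \<tau>)) (PNot (Atom (C 0 \<tau>))) \<in> H"
        unfolding H_def using T(1) unfolding Al_def by (rule mem_c)
      then have "\<not> \<alpha> (C 0 \<tau>)" using hs T by fastforce
      then obtain i where i: "i \<in> {1..N}" "covers (Ai i) \<tau>" using chain[OF T(1) _ T(2)] by auto
      have "Ai i \<in> set L" unfolding L_def set_map using i(1) by (intro imageI) auto
      then show "\<tau> \<in> cov L" unfolding cov_def using T i unfolding Al_def allowed_tuples_def by auto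
    qed
    have "card {\<tau>\<in>Al. \<alpha> (C N \<tau>)} \<le> card (cov L)"
      using sub covAl[OF LLS] finAl by (meson card_mono finite_subset)
    also have "\<dots> \<le> tuple_number N t P d \<phi>" unfolding TN using finLS LLS by auto
    finally show ?thesis by linarith
  qed
  obtain L where LLS: "L \<in> LS" and Lmax: "card (cov L) = tuple_number N t P d \<phi>"
    using Max_in[OF finLS] LSne unfolding TN by fastforce
  define \<alpha> :: "('p,'v) tvar \<Rightarrow> bool" where "\<alpha> x = (case x of X i p v \<Rightarrow> (L ! (i - 1)) p = v
      | C i \<tau> \<Rightarrow> (\<exists>j\<in>{1..i}. covers (L ! (j - 1)) \<tau>))" for x
  have Llen: "length L = N" and Ltc: "\<And>A. A \<in> set L \<Longrightarrow> test_case P d \<phi> A"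
    using LLS unfolding LS_def by auto
  have setL: "set L = (\<lambda>j. L ! (j - 1)) ` {1..N}"
  proof -
    have "set L = (\<lambda>j. L ! j) ` {..<N}" using Llen by (simp add: set_conv_nth image_def) blast
    also have "\<dots> = (\<lambda>j. L ! (j - 1)) ` {1..N}"
      by (simp only: image_Suc_lessThan[symmetric] image_image diff_Suc_1)
    finally show ?thesis .
  qed
  have Lin: "L ! (i - 1) \<in> set L" if "i \<in> {1..N}" for i using setL that by auto
  have hsat: "\<forall>h\<in>H. peval \<alpha> h"
  proof
    fix h assume "h \<in> H"
    then consider
        (x) i p where "i \<in> {1..N}" "p \<in> P" "h = ExactlyOne {X i p v | v. v \<in> d p}"
      | (s) i where "i \<in> {1..N}" "h = rename (\<lambda>(p, v). X i p v) \<phi>"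
      | (a) i \<tau> p v where "i \<in> {1..N}" "\<tau> \<in> Al" "(p, v) \<in> \<tau>"
          "h = PImp (Atom (C i \<tau>)) (POr (Atom (C (i - 1) \<tau>)) (Atom (X i p v)))"
      | (c) \<tau> where "\<tau> \<in> Al" "h = PImp (Atom (C N \<tau>)) (PNot (Atom (C 0 \<tau>)))"
      unfolding H_def Al_def by (rule mem_cases)
    then show "peval \<alpha> h"
    proof cases
      case x
      then have "(L ! (i - 1)) p \<in> d p" using Ltc[OF Lin[OF x(1)]] unfolding test_case_def by auto
      then show ?thesis using x by (auto simp: \<alpha>_def)
    next
      case s
      have "test_case P d \<phi> (L ! (i - 1))" using Ltc[OF Lin[OF s(1)]] .
      then have "peval (\<lambda>(p, v). (L ! (i - 1)) p = v) \<phi>" unfolding test_case_def by auto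
      moreover have "(\<alpha> \<circ> (\<lambda>(p, v). X i p v)) = (\<lambda>(p, v). (L ! (i - 1)) p = v)"
        by (auto simp: \<alpha>_def)
      ultimately show ?thesis using s by (simp add: peval_rename[OF inj_X])
    next
      case a
      show ?thesis
      proof (cases "\<exists>j\<in>{1..i-1}. covers (L ! (j - 1)) \<tau>")
        case True then show ?thesis using a by (auto simp: \<alpha>_def)
      next
        case False
        { assume "\<alpha> (C i \<tau>)"
          then obtain j where j: "j \<in> {1..i}" "covers (L ! (j - 1)) \<tau>" by (auto simp: \<alpha>_def)
          with False have "j = i" by force
          with j a have "(L ! (i - 1)) p = v" unfolding covers_def by auto }
        then show ?thesis using a by (auto simp: \<alpha>_def)
      qed
    next
      case c then show ?thesis by (auto simp: \<alpha>_def)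
    qed
  qed
  have eq: "{\<tau>\<in>Al. \<alpha> (C N \<tau>)} = cov L"
  proof
    show "cov L \<subseteq> {\<tau>\<in>Al. \<alpha> (C N \<tau>)}"
      using covAl[OF LLS] unfolding cov_def \<alpha>_def setL by auto
    show "{\<tau>\<in>Al. \<alpha> (C N \<tau>)} \<subseteq> cov L"
      unfolding cov_def \<alpha>_def setL Al_def allowed_tuples_def by auto
  qed
  have "pmaxsat_cost H (ccx_soft N t P d \<phi>) = enat (card Al - tuple_number N t P d \<phi>)"
    unfolding pmaxsat_cost_def
  proof (rule antisym)
    show "(INF \<alpha>\<in>{\<alpha>. \<forall>h\<in>H. peval \<alpha> h}. enat (\<Sum>(c, w)\<in>ccx_soft N t P d \<phi>. if peval \<alpha> c then 0 else w))
        \<le> enat (card Al - tuple_number N t P d \<phi>)"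
      by (rule INF_lower2[of \<alpha>]) (use hsat eq Lmax cost in auto)
    show "enat (card Al - tuple_number N t P d \<phi>)
        \<le> (INF \<alpha>\<in>{\<alpha>. \<forall>h\<in>H. peval \<alpha> h}. enat (\<Sum>(c, w)\<in>ccx_soft N t P d \<phi>. if peval \<alpha> c then 0 else w))"
      by (rule INF_greatest) (use lower cost in auto)
  qed
  then show ?thesis unfolding H_def Al_def .
qed

end
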